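(* Let $\mathbf{k}$ be a field of characteristic $0$, $n\ge3$, $m\in\mathbf{k}\setminus\mathcal{S}_n$, and let $\rho$ be an irreducible representation of $Br_n(m)$, indexed by the partition $\lambda$. Then either the spectrum of $\rho(t_{12})$ is contained in $\{-1,1\}$, or $|\lambda|<n$ and the spectrum of $\rho(t_{12})$ equals $\{-1,1,1-m\}$.
   Context: $Br_n(m)$ is the Brauer algebra over $\mathbf{k}$ with basis the Brauer diagrams on $n$ top and $n$ bottom points, product by stacking (second factor below) with closed loops replaced by $m$; $s_{12}$ is the transposition diagram, $p_{12}$ the diagram joining top $1$ to top $2$ and bottom $1$ to bottom $2$ with other strands vertical, $t_{12}=s_{12}-p_{12}$. For a partition $\mu$ with $|\mu|\le n$, $n-|\mu|$ even, $P_\mu\in\mathbb{Q}[m]$ is the polynomial equal, at every sufficiently large integer $m$, to the dimension of the irreducible $O(m)$-module indexed by $\mu$; $\mathcal{S}_n=\{m\mid\exists\mu,\ |\mu|\le n,\ P_\mu(m)=0\}\subset\mathbb{Z}$. For $m\notin\mathcal{S}_n$, $Br_n(m)$ is split semisimple with irreducible representations indexed (Wenzl's parametrization) by partitions $\mu$ with $|\mu|\le n$, $n-|\mu|$ even; those with $|\mu|=n$ are those factoring through $\mathbf{k}\mathfrak{S}_n=Br_n(m)/(p_{12})$, and restriction from $Br_n(m)$ to $Br_{n-1}(m)$ follows the rule $\mathrm{Res}\,\rho_\lambda=\sum_{\mu\nearrow\lambda}\rho_\mu+\sum_{\lambda\nearrow\mu}\rho_\mu$, where $\mu\nearrow\lambda$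 means $\lambda$ is obtained from $\mu$ by adding one box. *)

theory Defs
  imports "Jordan_Normal_Form.Spectral_Radius"
begin

text \<open>A point of a Brauer diagram on n top and n bottom points is a pair (b, i)
  with i < n; b = True means a top point, b = False a bottom point.
  A Brauer diagram is a fixed-point-free involution d on these 2n points
  (d p is the point joined to p); outside the 2n points d is the identity
  (normalisation, so that diagrams are uniquely represented).\<close>

type_synonym bpoint = "bool \<times> nat"
type_synonym bdiagram = "bpoint \<Rightarrow> bpoint"

definition bpoints :: "nat \<Rightarrow> bpoint set" where
  "bpoints n = UNIV \<times> {..<n}"

definition brauer_diagrams :: "nat \<Rightarrow> bdiagram set" where
  "brauer_diagrams n = {d. (\<forall>p\<in>bpoints n. d p \<in> bpoints n \<and> d p \<noteq> p \<and> d (d p) = p)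
                          \<and> (\<forall>p. p \<notin> bpoints n \<longrightarrow> d p = p)}"

text \<open>Stacking: d1 on top of d2.  The graph has three layers of vertices
  (layer, i): layer 0 = top row of d1, layer 1 = bottom row of d1 identified
  with top row of d2, layer 2 = bottom row of d2.\<close>

definition emb_upper :: "bpoint \<Rightarrow> nat \<times> nat" where
  "emb_upper p = (if fst p then (0, snd p) else (1, snd p))"

definition emb_lower :: "bpoint \<Rightarrow> nat \<times> nat" where
  "emb_lower p = (if fst p then (1, snd p) else (2, snd p))"

definition emb_outer :: "bpoint \<Rightarrow> nat \<times> nat" where
  "emb_outer p = (if fst p then (0, snd p) else (2, snd p))"

definition stack_edges :: "nat \<Rightarrow> bdiagram \<Rightarrow> bdiagram \<Rightarrow> ((nat \<times> nat) \<times> (nat \<times> nat)) set" where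
  "stack_edges n d1 d2 =
     {(emb_upper p, emb_upper (d1 p)) | p. p \<in> bpoints n} \<union>
     {(emb_lower p, emb_lower (d2 p)) | p. p \<in> bpoints n}"

definition stack_conn :: "nat \<Rightarrow> bdiagram \<Rightarrow> bdiagram \<Rightarrow> ((nat \<times> nat) \<times> (nat \<times> nat)) set" where
  "stack_conn n d1 d2 = (stack_edges n d1 d2 \<union> (stack_edges n d1 d2)\<inverse>)\<^sup>*"

definition bcompose :: "nat \<Rightarrow> bdiagram \<Rightarrow> bdiagram \<Rightarrow> bdiagram" where
  "bcompose n d1 d2 = (\<lambda>p. if p \<in> bpoints n then
       (THE q. q \<in> bpoints n \<and> q \<noteq> p \<and> (emb_outer p, emb_outer q) \<in> stack_conn n d1 d2)
     else p)"

text \<open>Number of closed loops: connected components lying entirely in the middle layer.\<close>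

definition bloops :: "nat \<Rightarrow> bdiagram \<Rightarrow> bdiagram \<Rightarrow> nat" where
  "bloops n d1 d2 = card {stack_conn n d1 d2 `` {(1, i)} | i. i < n \<and>
                           stack_conn n d1 d2 `` {(1, i)} \<subseteq> {1} \<times> UNIV}"

text \<open>Special diagrams: identity, s_12 (transposition of strands 1,2), p_12.
  Strands are indexed from 0, so "1,2" are the indices 0,1.\<close>

definition bid :: "nat \<Rightarrow> bdiagram" where
  "bid n = (\<lambda>p. if p \<in> bpoints n then (\<not> fst p, snd p) else p)"

definition bs12 :: "nat \<Rightarrow> bdiagram" where
  "bs12 n = (\<lambda>p. if p \<in> bpoints n then
      (\<not> fst p, if snd p = 0 then 1 else if snd p = 1 then 0 else snd p) else p)"

definition bp12 :: "nat \<Rightarrow> bdiagram" where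
  "bp12 n = (\<lambda>p. if p \<in> bpoints n then
      (if snd p = 0 then (fst p, 1) else if snd p = 1 then (fst p, 0) else (\<not> fst p, snd p))
    else p)"

text \<open>A (matrix) representation of Br_n(m) on k^N is given by the images of the
  basis diagrams; by linear extension this is the same as an algebra homomorphism
  Br_n(m) \<rightarrow> End(k^N): it must be unital and respect the product of
  basis elements d1 d2 = m^(loops) (d1 \<circ> d2).\<close>

definition brauer_rep :: "nat \<Rightarrow> 'k::field \<Rightarrow> nat \<Rightarrow> (bdiagram \<Rightarrow> 'k mat) \<Rightarrow> bool" where
  "brauer_rep n m N \<rho> \<longleftrightarrow>
     (\<forall>d\<in>brauer_diagrams n. \<rho> d \<in> carrier_mat N N) \<and>
     \<rho> (bid n) = 1\<^sub>m N \<and>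
     (\<forall>d1\<in>brauer_diagrams n. \<forall>d2\<in>brauer_diagrams n.
        \<rho> d1 * \<rho> d2 = (m ^ bloops n d1 d2) \<cdot>\<^sub>m \<rho> (bcompose n d1 d2))"

definition invariant_subspace :: "nat \<Rightarrow> nat \<Rightarrow> (bdiagram \<Rightarrow> 'k::field mat) \<Rightarrow> 'k vec set \<Rightarrow> bool" where
  "invariant_subspace n N \<rho> W \<longleftrightarrow>
     W \<subseteq> carrier_vec N \<and> 0\<^sub>v N \<in> W \<and>
     (\<forall>v\<in>W. \<forall>w\<in>W. v + w \<in> W) \<and> (\<forall>c. \<forall>v\<in>W. c \<cdot>\<^sub>v v \<in> W) \<and>
     (\<forall>d\<in>brauer_diagrams n. \<forall>v\<in>W. \<rho> d *\<^sub>v v \<in> W)"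

definition irreducible_brauer_rep :: "nat \<Rightarrow> 'k::field \<Rightarrow> nat \<Rightarrow> (bdiagram \<Rightarrow> 'k mat) \<Rightarrow> bool" where
  "irreducible_brauer_rep n m N \<rho> \<longleftrightarrow>
     brauer_rep n m N \<rho> \<and> N > 0 \<and>
     (\<forall>W. invariant_subspace n N \<rho> W \<longrightarrow> W = {0\<^sub>v N} \<or> W = carrier_vec N)"

text \<open>The representation factors through Br_n(m)/(p_12), i.e. it vanishes on the
  two-sided ideal generated by p_12, which is spanned by the elements d1 p_12 d2.\<close>

definition factors_through_sym :: "nat \<Rightarrow> nat \<Rightarrow> (bdiagram \<Rightarrow> 'k::field mat) \<Rightarrow> bool" where
  "factors_through_sym n N \<rho> \<longleftrightarrow>
     (\<forall>d1\<in>brauer_diagrams n. \<forall>d2\<in>brauer_diagrams n. \<rho> d1 * \<rho> (bp12 n) * \<rho> d2 = 0\<^sub>m N N)"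

definition rep_t12 :: "nat \<Rightarrow> (bdiagram \<Rightarrow> 'k::field mat) \<Rightarrow> 'k mat" where
  "rep_t12 n \<rho> = \<rho> (bs12 n) - \<rho> (bp12 n)"

text \<open>Partitions as weakly decreasing lists of positive integers; parts and the
  conjugate partition are 1-indexed, with parts beyond the length equal to 0.\<close>

definition is_partition :: "nat list \<Rightarrow> bool" where
  "is_partition \<mu> \<longleftrightarrow> sorted_wrt (\<ge>) \<mu> \<and> (\<forall>x\<in>set \<mu>. x > 0)"

definition part :: "nat list \<Rightarrow> nat \<Rightarrow> nat" where
  "part \<mu> i = (if 1 \<le> i \<and> i \<le> length \<mu> then \<mu> ! (i - 1) else 0)"

definition conj_part :: "nat list \<Rightarrow> nat \<Rightarrow> nat" where
  "conj_part \<mu> j = card {i. 1 \<le> i \<and> i \<le> length \<mu> \<and> j \<le> part \<mu> i}"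

definition boxes :: "nat list \<Rightarrow> (nat \<times> nat) set" where
  "boxes \<mu> = {(i, j). 1 \<le> i \<and> i \<le> length \<mu> \<and> 1 \<le> j \<and> j \<le> part \<mu> i}"

definition hook :: "nat list \<Rightarrow> nat \<times> nat \<Rightarrow> nat" where
  "hook \<mu> b = (case b of (i, j) \<Rightarrow> part \<mu> i - j + conj_part \<mu> j - i + 1)"

text \<open>El Samra--King: the factor attached to box (i,j) is
  x + mu_i + mu_j - i - j  if i \<le> j, and  x - mu'_i - mu'_j + i + j - 2  if i > j.\<close>

definition oshift :: "nat list \<Rightarrow> nat \<times> nat \<Rightarrow> int" where
  "oshift \<mu> b = (case b of (i, j) \<Rightarrow>
     if i \<le> j then int (part \<mu> i) + int (part \<mu> j) - int i - int j
     else int i + int j - 2 - int (conj_part \<mu> i) - int (conj_part \<mu> j))"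

text \<open>P_mu \<in> Q[x]: the polynomial giving, for all large integers m, the dimension
  of the irreducible O(m)-module indexed by mu (El Samra--King formula).\<close>

definition P_O :: "nat list \<Rightarrow> rat poly" where
  "P_O \<mu> = Polynomial.smult (1 / of_nat (\<Prod>b\<in>boxes \<mu>. hook \<mu> b))
                  (\<Prod>b\<in>boxes \<mu>. [: of_int (oshift \<mu> b), 1 :])"

definition S_set :: "nat \<Rightarrow> int set" where
  "S_set n = {z. \<exists>\<mu>. is_partition \<mu> \<and> sum_list \<mu> \<le> n \<and> even (n - sum_list \<mu>)
                    \<and> poly (P_O \<mu>) (of_int z) = 0}"

end

theory Submission
  imports Defs
begin


lemma mem_bpoints[simp]: "(b,i) \<in> bpoints n \<longleftrightarrow> i < n"
  by (auto simp: bpoints_def)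

lemma conn_up: "p \<in> bpoints n \<Longrightarrow> (emb_upper p, emb_upper (d1 p)) \<in> stack_conn n d1 d2"
  unfolding stack_conn_def stack_edges_def by (rule r_into_rtrancl) blast

lemma conn_low: "p \<in> bpoints n \<Longrightarrow> (emb_lower p, emb_lower (d2 p)) \<in> stack_conn n d1 d2"
  unfolding stack_conn_def stack_edges_def by (rule r_into_rtrancl) blast

lemma conn_sym: "(a,b) \<in> stack_conn n d1 d2 \<Longrightarrow> (b,a) \<in> stack_conn n d1 d2"
  unfolding stack_conn_def
  by (metis converse_Un converse_converse rtrancl_converseI sup_commute)

lemma conn_trans: "(a,b) \<in> stack_conn n d1 d2 \<Longrightarrow> (b,c) \<in> stack_conn n d1 d2 \<Longrightarrow> (a,c) \<in> stack_conn n d1 d2"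
  unfolding stack_conn_def by (rule rtrancl_trans)

lemma edge_cid:
  assumes "(x,y) \<in> stack_edges n d1 d2"
    and "\<forall>p\<in>bpoints n. cid (emb_upper p) = cid (emb_upper (d1 p)) \<and> cid (emb_lower p) = cid (emb_lower (d2 p))"
  shows "cid x = cid y"
proof -
  from assms(1) obtain p where "p \<in> bpoints n"
    "(x = emb_upper p \<and> y = emb_upper (d1 p)) \<or> (x = emb_lower p \<and> y = emb_lower (d2 p))"
    unfolding stack_edges_def by blast
  moreover have H: "cid (emb_upper p) = cid (emb_upper (d1 p))" "cid (emb_lower p) = cid (emb_lower (d2 p))"
    using bspec[OF assms(2) \<open>p \<in> bpoints n\<close>] by blast+
  ultimately show ?thesis by (elim disjE conjE) (simp_all only: H)
qed

lemma conn_cid: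
  assumes "(a,b) \<in> stack_conn n d1 d2"
    and "\<forall>p\<in>bpoints n. cid (emb_upper p) = cid (emb_upper (d1 p)) \<and> cid (emb_lower p) = cid (emb_lower (d2 p))"
  shows "cid b = cid a"
  using assms(1) unfolding stack_conn_def
proof (induction rule: rtrancl_induct)
  case base then show ?case by simp
next
  case (step y z)
  then have "(y,z) \<in> stack_edges n d1 d2 \<or> (z,y) \<in> stack_edges n d1 d2" by blast
  then have "cid z = cid y"
  proof
    assume "(y,z) \<in> stack_edges n d1 d2"
    from edge_cid[OF this assms(2)] show ?thesis by simp
  next
    assume "(z,y) \<in> stack_edges n d1 d2"
    from edge_cid[OF this assms(2)] show ?thesis by simp
  qed
  then show ?case using step.IH by simp
qed

lemma bcompose_eqI:
  assumes "p \<in> bpoints n" "t \<in> bpoints n" "t \<noteq> p"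
    "(emb_outer p, emb_outer t) \<in> stack_conn n d1 d2"
    "\<And>q. q \<in> bpoints n \<Longrightarrow> q \<noteq> p \<Longrightarrow> (emb_outer p, emb_outer q) \<in> stack_conn n d1 d2 \<Longrightarrow> q = t"
  shows "bcompose n d1 d2 p = t"
proof -
  have "(THE q. q \<in> bpoints n \<and> q \<noteq> p \<and> (emb_outer p, emb_outer q) \<in> stack_conn n d1 d2) = t"
  proof (rule the_equality)
    show "t \<in> bpoints n \<and> t \<noteq> p \<and> (emb_outer p, emb_outer t) \<in> stack_conn n d1 d2"
      using assms(2,3,4) by blast
  next
    fix q assume "q \<in> bpoints n \<and> q \<noteq> p \<and> (emb_outer p, emb_outer q) \<in> stack_conn n d1 d2"
    then show "q = t" using assms(5) by blast
  qed
  then show ?thesis unfolding bcompose_def using assms(1) by simp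
qed

lemma bloops_zero:
  assumes "\<forall>i<n. \<exists>x. ((1,i),x) \<in> stack_conn n d1 d2 \<and> fst x \<noteq> 1"
  shows "bloops n d1 d2 = 0"
proof -
  have "\<not> (stack_conn n d1 d2 `` {(1, i)} \<subseteq> {1} \<times> UNIV)" if "i < n" for i
  proof
    assume H: "stack_conn n d1 d2 `` {(1, i)} \<subseteq> {1} \<times> UNIV"
    from assms that obtain x where "((1,i),x) \<in> stack_conn n d1 d2" "fst x \<noteq> 1" by blast
    then show False using H by (cases x) auto
  qed
  then have "{stack_conn n d1 d2 `` {(1, i)} | i. i < n \<and>
                           stack_conn n d1 d2 `` {(1, i)} \<subseteq> {1} \<times> UNIV} = {}"
    by blast
  then show ?thesis unfolding bloops_def by simp
qed

definition pdiag :: "nat \<Rightarrow> (nat\<Rightarrow>nat) \<Rightarrow> (nat\<Rightarrow>nat) \<Rightarrow> bdiagram" where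
  "pdiag n f g = (\<lambda>p. if p \<in> bpoints n then (if fst p then (False, f (snd p)) else (True, g (snd p))) else p)"

definition isperm :: "nat \<Rightarrow> (nat\<Rightarrow>nat) \<Rightarrow> (nat\<Rightarrow>nat) \<Rightarrow> bool" where
  "isperm n f g \<longleftrightarrow> (\<forall>i<n. f i < n \<and> g i < n \<and> g (f i) = i \<and> f (g i) = i)"

lemma pdiag_brauer: "isperm n f g \<Longrightarrow> pdiag n f g \<in> brauer_diagrams n"
  unfolding brauer_diagrams_def pdiag_def isperm_def bpoints_def by auto

lemma pp_loops:
  assumes f: "isperm n f f'"
  shows "bloops n (pdiag n f f') d2 = 0"
proof (rule bloops_zero, intro allI impI)
  fix i assume i: "i < n"
  have "((0,f' i),(1, i)) \<in> stack_conn n (pdiag n f f') d2"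
    using conn_up[of "(True,f' i)" n "pdiag n f f'" d2] i f
    by (simp add: pdiag_def emb_upper_def isperm_def)
  then have "((1, i),(0,f' i)) \<in> stack_conn n (pdiag n f f') d2" by (rule conn_sym)
  then show "\<exists>x. ((1, i), x) \<in> stack_conn n (pdiag n f f') d2 \<and> fst x \<noteq> 1"
    by (intro exI[of _ "(0, f' i)"]) simp
qed



lemma pp_compose:
  assumes f: "isperm n f f'" and g: "isperm n g g'"
  shows "bcompose n (pdiag n f f') (pdiag n g g') = pdiag n (g \<circ> f) (f' \<circ> g')"
proof
  fix p :: bpoint
  let ?R = "stack_conn n (pdiag n f f') (pdiag n g g')"
  define cid where "cid = (\<lambda>(l::nat,i). if l = 0 then i else if l = 1 then f' i else f' (g' i))"
  have E: "\<forall>p\<in>bpoints n. cid (emb_upper p) = cid (emb_upper (pdiag n f f' p)) \<and>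
      cid (emb_lower p) = cid (emb_lower (pdiag n g g' p))"
  proof
    fix p :: bpoint assume "p \<in> bpoints n"
    then obtain b i where p: "p = (b,i)" "i < n" by (cases p) auto
    show "cid (emb_upper p) = cid (emb_upper (pdiag n f f' p)) \<and>
      cid (emb_lower p) = cid (emb_lower (pdiag n g g' p))"
      using f g p unfolding cid_def emb_upper_def emb_lower_def pdiag_def isperm_def by auto
  qed
  have fi: "\<And>i. i < n \<Longrightarrow> f i < n \<and> f' i < n \<and> f' (f i) = i \<and> f (f' i) = i" using f by (auto simp: isperm_def)
  have gi: "\<And>i. i < n \<Longrightarrow> g i < n \<and> g' i < n \<and> g' (g i) = i \<and> g (g' i) = i" using g by (auto simp: isperm_def)
  show "bcompose n (pdiag n f f') (pdiag n g g') p = pdiag n (g \<circ> f) (f' \<circ> g') p"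
  proof (cases "p \<in> bpoints n")
    case False then show ?thesis by (simp add: bcompose_def pdiag_def)
  next
    case True
    then obtain b i where p: "p = (b,i)" "i < n" by (cases p) auto
    show ?thesis
    proof (cases b)
      case True
      have c1: "((0,i),(1, f i)) \<in> ?R"
        using conn_up[of "(True,i)" n "pdiag n f f'" "pdiag n g g'"] p
        by (simp add: pdiag_def emb_upper_def)
      have c2: "((1,f i),(2, g (f i))) \<in> ?R"
        using conn_low[of "(True,f i)" n "pdiag n g g'" "pdiag n f f'"] p fi
        by (simp add: pdiag_def emb_lower_def)
      have "bcompose n (pdiag n f f') (pdiag n g g') p = (False, g (f i))"
      proof (rule bcompose_eqI)
        show "(emb_outer p, emb_outer (False, g (f i))) \<in> ?R"
          using conn_trans[OF c1 c2] p True by (simp add: emb_outer_def)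
      next
        fix q assume q: "q \<in> bpoints n" "q \<noteq> p" "(emb_outer p, emb_outer q) \<in> ?R"
        have cq: "cid (emb_outer q) = cid (emb_outer p)" using conn_cid[OF q(3) E] .
        obtain b' j where qq: "q = (b',j)" "j < n" using q(1) by (cases q) auto
        show "q = (False, g (f i))"
        proof (cases b')
          case True
          then have "j = i" using cq qq p \<open>b\<close> by (simp add: cid_def emb_outer_def)
          then show ?thesis using q(2) qq p \<open>b\<close> True by simp
        next
          case False
          then have "f' (g' j) = i" using cq qq p \<open>b\<close> by (simp add: cid_def emb_outer_def)
          then have "f i = g' j" using fi gi qq(2) by metis
          then have "j = g (f i)" using gi qq(2) by metis
          then show ?thesis using qq False by simp
        qed
      qed (use p True fi gi in auto)
      then show ?thesis using p True by (simp add: pdiag_def)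
    next
      case False
      have c1: "((2,i),(1, g' i)) \<in> ?R"
        using conn_low[of "(False,i)" n "pdiag n g g'" "pdiag n f f'"] p
        by (simp add: pdiag_def emb_lower_def)
      have c2: "((0,f' (g' i)),(1, g' i)) \<in> ?R"
        using conn_up[of "(True,f' (g' i))" n "pdiag n f f'" "pdiag n g g'"] p fi gi
        by (simp add: pdiag_def emb_upper_def)
      have "bcompose n (pdiag n f f') (pdiag n g g') p = (True, f' (g' i))"
      proof (rule bcompose_eqI)
        show "(emb_outer p, emb_outer (True, f' (g' i))) \<in> ?R"
          using conn_trans[OF c1 conn_sym[OF c2]] p False by (simp add: emb_outer_def)
      next
        fix q assume q: "q \<in> bpoints n" "q \<noteq> p" "(emb_outer p, emb_outer q) \<in> ?R"
        have cq: "cid (emb_outer q) = cid (emb_outer p)" using conn_cid[OF q(3) E] .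
        obtain b' j where qq: "q = (b',j)" "j < n" using q(1) by (cases q) auto
        show "q = (True, f' (g' i))"
        proof (cases b')
          case True
          then show ?thesis using cq qq p \<open>\<not> b\<close> by (simp add: cid_def emb_outer_def)
        next
          case False
          then have "f' (g' j) = f' (g' i)" using cq qq p \<open>\<not> b\<close> by (simp add: cid_def emb_outer_def)
          then have "g' j = g' i" using fi gi qq(2) p(2) by metis
          then have "j = i" using gi qq(2) p(2) by metis
          then show ?thesis using q(2) qq p \<open>\<not> b\<close> False by simp
        qed
      qed (use p False fi gi in auto)
      then show ?thesis using p False by (simp add: pdiag_def)
    qed
  qed
qed



definition phiL :: "(nat \<Rightarrow> nat) \<Rightarrow> bpoint \<Rightarrow> bpoint" where
  "phiL f p = (if fst p then (True, f (snd p)) else p)"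
definition convL :: "(nat \<Rightarrow> nat) \<Rightarrow> bpoint \<Rightarrow> bpoint" where
  "convL f' q = (if fst q then (True, f' (snd q)) else q)"
definition plc :: "nat \<Rightarrow> (nat \<Rightarrow> nat) \<Rightarrow> (nat \<Rightarrow> nat) \<Rightarrow> bdiagram \<Rightarrow> bdiagram" where
  "plc n f f' d2 = (\<lambda>p. if p \<in> bpoints n then convL f' (d2 (phiL f p)) else p)"

lemma pl_compose:
  assumes f: "isperm n f f'" and d2: "d2 \<in> brauer_diagrams n"
  shows "bcompose n (pdiag n f f') d2 = plc n f f' d2"
proof
  fix p :: bpoint
  let ?R = "stack_conn n (pdiag n f f') d2"
  have fi: "\<And>i. i < n \<Longrightarrow> f i < n \<and> f' i < n \<and> f' (f i) = i \<and> f (f' i) = i" using f by (auto simp: isperm_def)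
  have D: "\<And>p. p \<in> bpoints n \<Longrightarrow> d2 p \<in> bpoints n \<and> d2 p \<noteq> p \<and> d2 (d2 p) = p"
    using d2 unfolding brauer_diagrams_def by blast
  define Phi where "Phi = (\<lambda>(l::nat,i). if l = 2 then (False,i) else if l = 1 then (True,i) else (True, f i))"
  define cid where "cid = (\<lambda>v. {Phi v, d2 (Phi v)})"
  have Plow: "\<And>p. p \<in> bpoints n \<Longrightarrow> Phi (emb_lower p) = p"
    unfolding Phi_def emb_lower_def by (auto simp: bpoints_def)
  have E: "\<forall>p\<in>bpoints n. cid (emb_upper p) = cid (emb_upper (pdiag n f f' p)) \<and>
      cid (emb_lower p) = cid (emb_lower (d2 p))"
  proof
    fix p :: bpoint assume pb: "p \<in> bpoints n"
    then obtain b i where p: "p = (b,i)" "i < n" by (cases p) auto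
    have "cid (emb_upper p) = cid (emb_upper (pdiag n f f' p))"
      using fi p unfolding cid_def Phi_def emb_upper_def pdiag_def by auto
    moreover have "cid (emb_lower p) = cid (emb_lower (d2 p))"
      using Plow[OF pb] Plow[of "d2 p"] D[OF pb] unfolding cid_def by auto
    ultimately show "cid (emb_upper p) = cid (emb_upper (pdiag n f f' p)) \<and>
      cid (emb_lower p) = cid (emb_lower (d2 p))" ..
  qed
  have PO: "\<And>p. p \<in> bpoints n \<Longrightarrow> Phi (emb_outer p) = phiL f p"
  proof -
    fix p :: bpoint assume "p \<in> bpoints n"
    then obtain b i where p: "p = (b,i)" "i < n" by (cases p) auto
    show "?thesis p" using p  by (cases b) (simp_all add: Phi_def emb_outer_def phiL_def)
  qed
  have phib: "\<And>p. p \<in> bpoints n \<Longrightarrow> phiL f p \<in> bpoints n"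
  proof -
    fix p :: bpoint assume "p \<in> bpoints n"
    then obtain b i where p: "p = (b,i)" "i < n" by (cases p) auto
    show "?thesis p" using p fi[OF p(2)] by (cases b) (simp_all add: phiL_def)
  qed
  have convb: "\<And>p. p \<in> bpoints n \<Longrightarrow> convL f' p \<in> bpoints n"
  proof -
    fix p :: bpoint assume "p \<in> bpoints n"
    then obtain b i where p: "p = (b,i)" "i < n" by (cases p) auto
    show "?thesis p" using p fi[OF p(2)] by (cases b) (simp_all add: convL_def)
  qed
  have cp: "\<And>p. p \<in> bpoints n \<Longrightarrow> convL f' (phiL f p) = p"
  proof -
    fix p :: bpoint assume "p \<in> bpoints n"
    then obtain b i where p: "p = (b,i)" "i < n" by (cases p) auto
    show "?thesis p" using p fi[OF p(2)] by (cases b) (simp_all add: convL_def phiL_def)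
  qed
  have pc: "\<And>p. p \<in> bpoints n \<Longrightarrow> phiL f (convL f' p) = p"
  proof -
    fix p :: bpoint assume "p \<in> bpoints n"
    then obtain b i where p: "p = (b,i)" "i < n" by (cases p) auto
    show "?thesis p" using p fi[OF p(2)] by (cases b) (simp_all add: convL_def phiL_def)
  qed
  have path1: "(emb_outer p, emb_lower (phiL f p)) \<in> ?R" if pb: "p \<in> bpoints n" for p
  proof -
    obtain b i where p: "p = (b,i)" "i < n" using pb by (cases p) auto
    show ?thesis
    proof (cases b)
      case True then show ?thesis
        using conn_up[of "(True,i)" n "pdiag n f f'" d2] p
        by (simp add: pdiag_def emb_upper_def emb_outer_def emb_lower_def phiL_def)
    next
      case False then show ?thesis using p
        by (simp add: emb_outer_def emb_lower_def phiL_def stack_conn_def)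
    qed
  qed
  have path2: "(emb_lower z, emb_outer (convL f' z)) \<in> ?R" if zb: "z \<in> bpoints n" for z
  proof -
    obtain b i where z: "z = (b,i)" "i < n" using zb by (cases z) auto
    show ?thesis
    proof (cases b)
      case True then show ?thesis
        using conn_sym[OF conn_up[of "(True,f' i)" n "pdiag n f f'" d2]] z fi
        by (simp add: pdiag_def emb_upper_def emb_outer_def emb_lower_def convL_def)
    next
      case False then show ?thesis using z
        by (simp add: emb_outer_def emb_lower_def convL_def stack_conn_def)
    qed
  qed
  show "bcompose n (pdiag n f f') d2 p = plc n f f' d2 p"
  proof (cases "p \<in> bpoints n")
    case False then show ?thesis by (simp add: bcompose_def plc_def)
  next
    case True
    define x where "x = phiL f p"
    define y where "y = d2 x"
    have xb: "x \<in> bpoints n" using phib[OF True] x_def by simp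
    have yb: "y \<in> bpoints n" "y \<noteq> x" using D[OF xb] y_def by auto
    have "bcompose n (pdiag n f f') d2 p = convL f' y"
    proof (rule bcompose_eqI)
      show "p \<in> bpoints n" by fact
      show "convL f' y \<in> bpoints n" using convb[OF yb(1)] .
      show "convL f' y \<noteq> p" using pc[OF yb(1)] yb(2) x_def by metis
      show "(emb_outer p, emb_outer (convL f' y)) \<in> ?R"
      proof -
        have "(emb_outer p, emb_lower x) \<in> ?R" using path1[OF True] x_def by simp
        moreover have "(emb_lower x, emb_lower y) \<in> ?R" using conn_low[OF xb, of d2 "pdiag n f f'"] y_def by simp
        ultimately show ?thesis using path2[OF yb(1)] conn_trans by blast
      qed
    next
      fix q assume q: "q \<in> bpoints n" "q \<noteq> p" "(emb_outer p, emb_outer q) \<in> ?R"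
      have cq: "cid (emb_outer q) = cid (emb_outer p)" using conn_cid[OF q(3) E] .
      then have "{phiL f q, d2 (phiL f q)} = {x, y}" unfolding cid_def
        using PO[OF q(1)] PO[OF True] x_def y_def by simp
      moreover have "phiL f q \<noteq> x" using cp q True x_def by metis
      ultimately have "phiL f q = y" by blast
      then show "q = convL f' y" using cp[OF q(1)] by metis
    qed
    then show ?thesis using True x_def y_def by (simp add: plc_def)
  qed
qed

definition psiR :: "(nat \<Rightarrow> nat) \<Rightarrow> bpoint \<Rightarrow> bpoint" where
  "psiR g' p = (if fst p then p else (False, g' (snd p)))"
definition convR :: "(nat \<Rightarrow> nat) \<Rightarrow> bpoint \<Rightarrow> bpoint" where
  "convR g q = (if fst q then q else (False, g (snd q)))"
definition prc :: "nat \<Rightarrow> (nat \<Rightarrow> nat) \<Rightarrow> (nat \<Rightarrow> nat) \<Rightarrow> bdiagram \<Rightarrow> bdiagram" where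
  "prc n g g' d1 = (\<lambda>p. if p \<in> bpoints n then convR g (d1 (psiR g' p)) else p)"

lemma pr_compose:
  assumes g: "isperm n g g'" and d1: "d1 \<in> brauer_diagrams n"
  shows "bcompose n d1 (pdiag n g g') = prc n g g' d1"
proof
  fix p :: bpoint
  let ?R = "stack_conn n d1 (pdiag n g g')"
  have gi: "\<And>i. i < n \<Longrightarrow> g i < n \<and> g' i < n \<and> g' (g i) = i \<and> g (g' i) = i" using g by (auto simp: isperm_def)
  have D: "\<And>p. p \<in> bpoints n \<Longrightarrow> d1 p \<in> bpoints n \<and> d1 p \<noteq> p \<and> d1 (d1 p) = p"
    using d1 unfolding brauer_diagrams_def by blast
  define Phi where "Phi = (\<lambda>(l::nat,i). if l = 0 then (True,i) else if l = 1 then (False,i) else (False, g' i))"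
  define cid where "cid = (\<lambda>v. {Phi v, d1 (Phi v)})"
  have Pup: "\<And>p. p \<in> bpoints n \<Longrightarrow> Phi (emb_upper p) = p"
    unfolding Phi_def emb_upper_def by (auto simp: bpoints_def)
  have E: "\<forall>p\<in>bpoints n. cid (emb_upper p) = cid (emb_upper (d1 p)) \<and>
      cid (emb_lower p) = cid (emb_lower (pdiag n g g' p))"
  proof
    fix p :: bpoint assume pb: "p \<in> bpoints n"
    then obtain b i where p: "p = (b,i)" "i < n" by (cases p) auto
    have "cid (emb_lower p) = cid (emb_lower (pdiag n g g' p))"
      using gi p unfolding cid_def Phi_def emb_lower_def pdiag_def by auto
    moreover have "cid (emb_upper p) = cid (emb_upper (d1 p))"
      using Pup[OF pb] Pup[of "d1 p"] D[OF pb] unfolding cid_def by auto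
    ultimately show "cid (emb_upper p) = cid (emb_upper (d1 p)) \<and>
      cid (emb_lower p) = cid (emb_lower (pdiag n g g' p))" by simp
  qed
  have PO: "\<And>p. p \<in> bpoints n \<Longrightarrow> Phi (emb_outer p) = psiR g' p"
  proof -
    fix p :: bpoint assume "p \<in> bpoints n"
    then obtain b i where p: "p = (b,i)" "i < n" by (cases p) auto
    show "?thesis p" using p  by (cases b) (simp_all add: Phi_def emb_outer_def psiR_def)
  qed
  have psib: "\<And>p. p \<in> bpoints n \<Longrightarrow> psiR g' p \<in> bpoints n"
  proof -
    fix p :: bpoint assume "p \<in> bpoints n"
    then obtain b i where p: "p = (b,i)" "i < n" by (cases p) auto
    show "?thesis p" using p gi[OF p(2)] by (cases b) (simp_all add: psiR_def)
  qed
  have convb: "\<And>p. p \<in> bpoints n \<Longrightarrow> convR g p \<in> bpoints n"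
  proof -
    fix p :: bpoint assume "p \<in> bpoints n"
    then obtain b i where p: "p = (b,i)" "i < n" by (cases p) auto
    show "?thesis p" using p gi[OF p(2)] by (cases b) (simp_all add: convR_def)
  qed
  have cp: "\<And>p. p \<in> bpoints n \<Longrightarrow> convR g (psiR g' p) = p"
  proof -
    fix p :: bpoint assume "p \<in> bpoints n"
    then obtain b i where p: "p = (b,i)" "i < n" by (cases p) auto
    show "?thesis p" using p gi[OF p(2)] by (cases b) (simp_all add: convR_def psiR_def)
  qed
  have pc: "\<And>p. p \<in> bpoints n \<Longrightarrow> psiR g' (convR g p) = p"
  proof -
    fix p :: bpoint assume "p \<in> bpoints n"
    then obtain b i where p: "p = (b,i)" "i < n" by (cases p) auto
    show "?thesis p" using p gi[OF p(2)] by (cases b) (simp_all add: convR_def psiR_def)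
  qed
  have path1: "(emb_outer p, emb_upper (psiR g' p)) \<in> ?R" if pb: "p \<in> bpoints n" for p
  proof -
    obtain b i where p: "p = (b,i)" "i < n" using pb by (cases p) auto
    show ?thesis
    proof (cases b)
      case False then show ?thesis
        using conn_sym[OF conn_low[of "(True,g' i)" n "pdiag n g g'" d1]] p gi
        by (simp add: pdiag_def emb_upper_def emb_outer_def emb_lower_def psiR_def)
    next
      case True then show ?thesis using p
        by (simp add: emb_outer_def emb_upper_def psiR_def stack_conn_def)
    qed
  qed
  have path2: "(emb_upper z, emb_outer (convR g z)) \<in> ?R" if zb: "z \<in> bpoints n" for z
  proof -
    obtain b i where z: "z = (b,i)" "i < n" using zb by (cases z) auto
    show ?thesis
    proof (cases b)
      case False then show ?thesis
        using conn_low[of "(True,i)" n "pdiag n g g'" d1] z gi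
        by (simp add: pdiag_def emb_upper_def emb_outer_def emb_lower_def convR_def)
    next
      case True then show ?thesis using z
        by (simp add: emb_outer_def emb_upper_def convR_def stack_conn_def)
    qed
  qed
  show "bcompose n d1 (pdiag n g g') p = prc n g g' d1 p"
  proof (cases "p \<in> bpoints n")
    case False then show ?thesis by (simp add: bcompose_def prc_def)
  next
    case True
    define x where "x = psiR g' p"
    define y where "y = d1 x"
    have xb: "x \<in> bpoints n" using psib[OF True] x_def by simp
    have yb: "y \<in> bpoints n" "y \<noteq> x" using D[OF xb] y_def by auto
    have "bcompose n d1 (pdiag n g g') p = convR g y"
    proof (rule bcompose_eqI)
      show "p \<in> bpoints n" by fact
      show "convR g y \<in> bpoints n" using convb[OF yb(1)] .
      show "convR g y \<noteq> p" using pc[OF yb(1)] yb(2) x_def by metis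
      show "(emb_outer p, emb_outer (convR g y)) \<in> ?R"
      proof -
        have "(emb_outer p, emb_upper x) \<in> ?R" using path1[OF True] x_def by simp
        moreover have "(emb_upper x, emb_upper y) \<in> ?R" using conn_up[OF xb, of d1 "pdiag n g g'"] y_def by simp
        ultimately show ?thesis using path2[OF yb(1)] conn_trans by blast
      qed
    next
      fix q assume q: "q \<in> bpoints n" "q \<noteq> p" "(emb_outer p, emb_outer q) \<in> ?R"
      have cq: "cid (emb_outer q) = cid (emb_outer p)" using conn_cid[OF q(3) E] .
      then have "{psiR g' q, d1 (psiR g' q)} = {x, y}" unfolding cid_def
        using PO[OF q(1)] PO[OF True] x_def y_def by simp
      moreover have "psiR g' q \<noteq> x" using cp q True x_def by metis
      ultimately have "psiR g' q = y" by blast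
      then show "q = convR g y" using cp[OF q(1)] by metis
    qed
    then show ?thesis using True x_def y_def by (simp add: prc_def)
  qed
qed

lemma pr_loops:
  assumes g: "isperm n g g'"
  shows "bloops n d1 (pdiag n g g') = 0"
proof (rule bloops_zero, intro allI impI)
  fix i assume i: "i < n"
  have "((1,i),(2, g i)) \<in> stack_conn n d1 (pdiag n g g')"
    using conn_low[of "(True,i)" n "pdiag n g g'" d1] i g
    by (simp add: pdiag_def emb_lower_def isperm_def)
  then show "\<exists>x. ((1, i), x) \<in> stack_conn n d1 (pdiag n g g') \<and> fst x \<noteq> 1"
    by fastforce
qed



lemma up_step: "p \<in> bpoints n \<Longrightarrow> emb_upper p = a \<Longrightarrow> emb_upper (d1 p) = b \<Longrightarrow> (a,b) \<in> stack_conn n d1 d2"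
  using conn_up by blast
lemma low_step: "p \<in> bpoints n \<Longrightarrow> emb_lower p = a \<Longrightarrow> emb_lower (d2 p) = b \<Longrightarrow> (a,b) \<in> stack_conn n d1 d2"
  using conn_low by blast

lemma conn_image_eq: "(a,b) \<in> stack_conn n d1 d2 \<Longrightarrow> stack_conn n d1 d2 `` {a} = stack_conn n d1 d2 `` {b}"
  using conn_trans conn_sym by blast

lemma bcompose_cidI:
  assumes E: "\<forall>p\<in>bpoints n. cid (emb_upper p) = cid (emb_upper (d1 p)) \<and> cid (emb_lower p) = cid (emb_lower (d2 p))"
    and T: "\<forall>p\<in>bpoints n. t p \<in> bpoints n \<and> t p \<noteq> p"
    and P: "\<forall>p\<in>bpoints n. (emb_outer p, emb_outer (t p)) \<in> stack_conn n d1 d2"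
    and U: "\<forall>p\<in>bpoints n. \<forall>q\<in>bpoints n. q \<noteq> p \<longrightarrow> cid (emb_outer q) = cid (emb_outer p) \<longrightarrow> q = t p"
    and O: "\<forall>p. p \<notin> bpoints n \<longrightarrow> t p = p"
  shows "bcompose n d1 d2 = t"
proof
  fix p show "bcompose n d1 d2 p = t p"
  proof (cases "p \<in> bpoints n")
    case False
    then have "t p = p" using O by blast
    then show ?thesis using False by (simp add: bcompose_def)
  next
    case True
    show ?thesis
    proof (rule bcompose_eqI)
      fix q assume q: "q \<in> bpoints n" "q \<noteq> p" "(emb_outer p, emb_outer q) \<in> stack_conn n d1 d2"
      have "cid (emb_outer q) = cid (emb_outer p)" using conn_cid[OF q(3) E] .
      then show "q = t p" using U True q by blast
    qed (use True T P in auto)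
  qed
qed

definition sw12 :: "nat \<Rightarrow> nat" where "sw12 i = (if i = 0 then 1 else if i = 1 then 0 else i)"
definition sw23 :: "nat \<Rightarrow> nat" where "sw23 i = (if i = 1 then 2 else if i = 2 then 1 else i)"
definition sw13 :: "nat \<Rightarrow> nat" where "sw13 i = (if i = 0 then 2 else if i = 2 then 0 else i)"

definition bs23 :: "nat \<Rightarrow> bdiagram" where "bs23 n = pdiag n sw23 sw23"
definition bs13 :: "nat \<Rightarrow> bdiagram" where "bs13 n = pdiag n sw13 sw13"

definition Ydiag :: "nat \<Rightarrow> bdiagram" where
  "Ydiag n = (\<lambda>p. if p \<in> bpoints n then
     (if fst p then (if snd p = 0 then (True,2) else if snd p = 2 then (True,0) else if snd p = 1 then (False,2) else (False, snd p))
      else (if snd p = 2 then (True,1) else if snd p = 0 then (False,1) else if snd p = 1 then (False,0) else (True, snd p)))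
    else p)"

lemma isperm_sw12: "n \<ge> 3 \<Longrightarrow> isperm n sw12 sw12" by (auto simp: isperm_def sw12_def)
lemma isperm_sw23: "n \<ge> 3 \<Longrightarrow> isperm n sw23 sw23" by (auto simp: isperm_def sw23_def)
lemma isperm_id: "isperm n id id" by (auto simp: isperm_def)
lemma isperm_comp: "isperm n f f' \<Longrightarrow> isperm n g g' \<Longrightarrow> isperm n (g \<circ> f) (f' \<circ> g')"
  by (auto simp: isperm_def)

lemma bs12_pdiag: "bs12 n = pdiag n sw12 sw12"
  by (rule ext, case_tac x) (auto simp: bs12_def pdiag_def sw12_def)
lemma bid_pdiag: "bid n = pdiag n id id"
  by (rule ext, case_tac x) (auto simp: bid_def pdiag_def)

lemma bp12_brauer: "n \<ge> 3 \<Longrightarrow> bp12 n \<in> brauer_diagrams n"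
  unfolding brauer_diagrams_def bp12_def bpoints_def by auto
lemma Y_brauer: "n \<ge> 3 \<Longrightarrow> Ydiag n \<in> brauer_diagrams n"
  unfolding brauer_diagrams_def Ydiag_def bpoints_def by auto

lemma s12_s12: "n \<ge> 3 \<Longrightarrow> bcompose n (bs12 n) (bs12 n) = bid n"
proof -
  assume n: "n \<ge> 3"
  have "sw12 \<circ> sw12 = id" by (rule ext) (simp add: sw12_def)
  then show ?thesis using pp_compose[OF isperm_sw12[OF n] isperm_sw12[OF n]]
    by (simp add: bs12_pdiag bid_pdiag)
qed

lemma s23_s23: "n \<ge> 3 \<Longrightarrow> bcompose n (bs23 n) (bs23 n) = bid n"
proof -
  assume n: "n \<ge> 3"
  have "sw23 \<circ> sw23 = id" by (rule ext) (simp add: sw23_def)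
  then show ?thesis using pp_compose[OF isperm_sw23[OF n] isperm_sw23[OF n]]
    by (simp add: bs23_def bid_pdiag)
qed

lemma braid1: "n \<ge> 3 \<Longrightarrow> bcompose n (bcompose n (bs12 n) (bs23 n)) (bs12 n) = bs13 n"
proof -
  assume n: "n \<ge> 3"
  have "sw12 \<circ> (sw23 \<circ> sw12) = sw13" "sw12 \<circ> sw23 \<circ> sw12 = sw13" by (rule ext, simp add: sw12_def sw23_def sw13_def)+
  then show ?thesis using pp_compose[OF isperm_sw12[OF n] isperm_sw23[OF n]]
      pp_compose[OF isperm_comp[OF isperm_sw12[OF n] isperm_sw23[OF n]] isperm_sw12[OF n]]
    by (simp add: bs12_pdiag bs23_def bs13_def)
qed

lemma braid2: "n \<ge> 3 \<Longrightarrow> bcompose n (bcompose n (bs23 n) (bs12 n)) (bs23 n) = bs13 n"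
proof -
  assume n: "n \<ge> 3"
  have "sw23 \<circ> (sw12 \<circ> sw23) = sw13" "sw23 \<circ> sw12 \<circ> sw23 = sw13" by (rule ext, simp add: sw12_def sw23_def sw13_def)+
  then show ?thesis using pp_compose[OF isperm_sw23[OF n] isperm_sw12[OF n]]
      pp_compose[OF isperm_comp[OF isperm_sw23[OF n] isperm_sw12[OF n]] isperm_sw23[OF n]]
    by (simp add: bs12_pdiag bs23_def bs13_def)
qed

lemma s12_p12: "n \<ge> 3 \<Longrightarrow> bcompose n (bs12 n) (bp12 n) = bp12 n"
proof -
  assume n: "n \<ge> 3"
  have "plc n sw12 sw12 (bp12 n) = bp12 n"
    using n by (rule_tac ext, case_tac x) (auto simp: plc_def convL_def phiL_def bp12_def sw12_def)
  then show ?thesis using pl_compose[OF isperm_sw12[OF n] bp12_brauer[OF n]] by (simp add: bs12_pdiag)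
qed

lemma p12_s12: "n \<ge> 3 \<Longrightarrow> bcompose n (bp12 n) (bs12 n) = bp12 n"
proof -
  assume n: "n \<ge> 3"
  have "prc n sw12 sw12 (bp12 n) = bp12 n"
    using n by (rule_tac ext, case_tac x) (auto simp: prc_def convR_def psiR_def bp12_def sw12_def)
  then show ?thesis using pr_compose[OF isperm_sw12[OF n] bp12_brauer[OF n]] by (simp add: bs12_pdiag)
qed

lemma s23_p12: "n \<ge> 3 \<Longrightarrow> bcompose n (bs23 n) (bp12 n) = Ydiag n"
proof -
  assume n: "n \<ge> 3"
  have "plc n sw23 sw23 (bp12 n) = Ydiag n"
    using n by (rule_tac ext, case_tac x) (auto simp: plc_def convL_def phiL_def bp12_def sw23_def Ydiag_def)
  then show ?thesis using pl_compose[OF isperm_sw23[OF n] bp12_brauer[OF n]] by (simp add: bs23_def)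
qed



lemma p12_p12: assumes n: "n \<ge> 3" shows "bcompose n (bp12 n) (bp12 n) = bp12 n"
proof (rule bcompose_cidI[where cid = "\<lambda>(l::nat,i). if i < 2 then l else i + 10"])
  let ?R = "stack_conn n (bp12 n) (bp12 n)"
  show "\<forall>p\<in>bpoints n. (emb_outer p, emb_outer (bp12 n p)) \<in> ?R"
  proof
    fix p :: bpoint assume "p \<in> bpoints n"
    then obtain b i where p: "p = (b,i)" "i < n" by (cases p) auto
    consider "b" "i = 0" | "b" "i = 1" | "\<not> b" "i = 0" | "\<not> b" "i = 1" | "b" "i \<ge> 2" | "\<not> b" "i \<ge> 2" by linarith
    then show "(emb_outer p, emb_outer (bp12 n p)) \<in> ?R"
    proof cases
      case 1 then show ?thesis using p n
        by (intro up_step[where p="(True,0)"]) (auto simp: bp12_def emb_upper_def emb_outer_def)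
    next
      case 2 then show ?thesis using p n
        by (intro up_step[where p="(True,1)"]) (auto simp: bp12_def emb_upper_def emb_outer_def)
    next
      case 3 then show ?thesis using p n
        by (intro low_step[where p="(False,0)"]) (auto simp: bp12_def emb_lower_def emb_outer_def)
    next
      case 4 then show ?thesis using p n
        by (intro low_step[where p="(False,1)"]) (auto simp: bp12_def emb_lower_def emb_outer_def)
    next
      case 5
      have "((0,i),(1,i)) \<in> ?R" using 5 p
        by (intro up_step[where p="(True,i)"]) (auto simp: bp12_def emb_upper_def)
      moreover have "((1,i),(2,i)) \<in> ?R" using 5 p
        by (intro low_step[where p="(True,i)"]) (auto simp: bp12_def emb_lower_def)
      ultimately have "((0,i),(2,i)) \<in> ?R \<and> ((2,i),(0,i)) \<in> ?R" using conn_trans conn_sym by blast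
      then show ?thesis using 5 p by (simp add: bp12_def emb_outer_def)
    next
      case 6
      have "((1,i),(0,i)) \<in> ?R" using 6 p
        by (intro up_step[where p="(False,i)"]) (auto simp: bp12_def emb_upper_def)
      moreover have "((2,i),(1,i)) \<in> ?R" using 6 p
        by (intro low_step[where p="(False,i)"]) (auto simp: bp12_def emb_lower_def)
      ultimately have "((0,i),(2,i)) \<in> ?R \<and> ((2,i),(0,i)) \<in> ?R" using conn_trans conn_sym by blast
      then show ?thesis using 6 p by (simp add: bp12_def emb_outer_def)
    qed
  qed
qed (use n in \<open>auto simp: bp12_def emb_upper_def emb_lower_def emb_outer_def bpoints_def split: if_splits\<close>)



lemma p12_p12_loops: assumes n: "n \<ge> 3" shows "bloops n (bp12 n) (bp12 n) = 1"
proof -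
  let ?R = "stack_conn n (bp12 n) (bp12 n)"
  define cid where "cid = (\<lambda>(l::nat,i::nat). if i < 2 then l else i + 10)"
  have E: "\<forall>p\<in>bpoints n. cid (emb_upper p) = cid (emb_upper (bp12 n p)) \<and> cid (emb_lower p) = cid (emb_lower (bp12 n p))"
    by (auto simp: cid_def bp12_def emb_upper_def emb_lower_def bpoints_def)
  have sub: "?R `` {(1,i)} \<subseteq> {1} \<times> UNIV" if "i < 2" for i
  proof
    fix x assume "x \<in> ?R `` {(1,i)}"
    then have "cid x = cid (1,i)" using conn_cid[OF _ E] by blast
    then show "x \<in> {1} \<times> UNIV" using that by (cases x) (auto simp: cid_def split: if_splits)
  qed
  have nsub: "\<not> ?R `` {(1,i)} \<subseteq> {1} \<times> UNIV" if "2 \<le> i" "i < n" for i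
  proof -
    have "((1,i),(0,i)) \<in> ?R" using that
      by (intro up_step[where p="(False,i)"]) (auto simp: bp12_def emb_upper_def)
    then show ?thesis
    proof (intro notI)
      assume H: "?R `` {(1,i)} \<subseteq> {1} \<times> UNIV" and c: "((1,i),(0,i)) \<in> ?R"
      from c have "(0::nat,i) \<in> ?R `` {(1,i)}" by blast
      with H have "(0::nat,i) \<in> {1} \<times> UNIV" by blast
      then show False by simp
    qed
  qed
  have eq: "?R `` {(1,1)} = ?R `` {(1,0)}"
  proof -
    have "((1,0),(1,1)) \<in> ?R" using n
      by (intro up_step[where p="(False,0)"]) (auto simp: bp12_def emb_upper_def)
    then show ?thesis using conn_image_eq by metis
  qed
  have "{?R `` {(1, i)} | i. i < n \<and> ?R `` {(1, i)} \<subseteq> {1} \<times> UNIV} = {?R `` {(1,0)}}"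
  proof (intro equalityI subsetI)
    fix X assume "X \<in> {?R `` {(1, i)} | i. i < n \<and> ?R `` {(1, i)} \<subseteq> {1} \<times> UNIV}"
    then obtain i where i: "X = ?R `` {(1, i)}" "i < n" "?R `` {(1, i)} \<subseteq> {1} \<times> UNIV" by blast
    then have "i < 2" using nsub by force
    then have "i = 0 \<or> i = 1" by auto
    then show "X \<in> {?R `` {(1,0)}}" using i eq by auto
  next
    fix X assume "X \<in> {?R `` {(1,0)}}"
    then show "X \<in> {?R `` {(1, i)} | i. i < n \<and> ?R `` {(1, i)} \<subseteq> {1} \<times> UNIV}"
      using sub[of 0] n by auto
  qed
  then show ?thesis unfolding bloops_def by simp
qed

lemma p12_Y: assumes n: "n \<ge> 3" shows "bcompose n (bp12 n) (Ydiag n) = bp12 n"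
proof (rule bcompose_cidI[where cid = "\<lambda>(l::nat,i). if i \<ge> 3 then i + 10 else if i = 2 then 1 else l"])
  let ?R = "stack_conn n (bp12 n) (Ydiag n)"
  show "\<forall>p\<in>bpoints n. (emb_outer p, emb_outer (bp12 n p)) \<in> ?R"
  proof
    fix p :: bpoint assume "p \<in> bpoints n"
    then obtain b i where p: "p = (b,i)" "i < n" by (cases p) auto
    have a1: "((0,2),(1,2)) \<in> ?R" using n
      by (intro up_step[where p="(True,2)"]) (auto simp: bp12_def emb_upper_def)
    have a2: "((1,2),(1,0)) \<in> ?R" using n
      by (intro low_step[where p="(True,2)"]) (auto simp: Ydiag_def emb_lower_def)
    have a3: "((1,0),(1,1)) \<in> ?R" using n
      by (intro up_step[where p="(False,0)"]) (auto simp: bp12_def emb_upper_def)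
    have a4: "((1,1),(2,2)) \<in> ?R" using n
      by (intro low_step[where p="(True,1)"]) (auto simp: Ydiag_def emb_lower_def)
    have a: "((0,2),(2,2)) \<in> ?R" using a1 a2 a3 a4 conn_trans by blast
    consider "b" "i = 0" | "b" "i = 1" | "\<not> b" "i = 0" | "\<not> b" "i = 1" | "b" "i = 2" | "\<not> b" "i = 2"
      | "b" "i \<ge> 3" | "\<not> b" "i \<ge> 3" by linarith
    then show "(emb_outer p, emb_outer (bp12 n p)) \<in> ?R"
    proof cases
      case 1 then show ?thesis using p n
        by (intro up_step[where p="(True,0)"]) (auto simp: bp12_def emb_upper_def emb_outer_def)
    next
      case 2 then show ?thesis using p n
        by (intro up_step[where p="(True,1)"]) (auto simp: bp12_def emb_upper_def emb_outer_def)
    next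
      case 3 then show ?thesis using p n
        by (intro low_step[where p="(False,0)"]) (auto simp: Ydiag_def bp12_def emb_lower_def emb_outer_def)
    next
      case 4 then show ?thesis using p n
        by (intro low_step[where p="(False,1)"]) (auto simp: Ydiag_def bp12_def emb_lower_def emb_outer_def)
    next
      case 5 then show ?thesis using p n a by (simp add: bp12_def emb_outer_def)
    next
      case 6 then show ?thesis using p n conn_sym[OF a] by (simp add: bp12_def emb_outer_def)
    next
      case 7
      have "((0,i),(1,i)) \<in> ?R" using 7 p
        by (intro up_step[where p="(True,i)"]) (auto simp: bp12_def emb_upper_def)
      moreover have "((1,i),(2,i)) \<in> ?R" using 7 p
        by (intro low_step[where p="(True,i)"]) (auto simp: Ydiag_def emb_lower_def)
      ultimately have "((0,i),(2,i)) \<in> ?R \<and> ((2,i),(0,i)) \<in> ?R" using conn_trans conn_sym by blast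
      then show ?thesis using 7 p by (simp add: bp12_def emb_outer_def)
    next
      case 8
      have "((1,i),(0,i)) \<in> ?R" using 8 p
        by (intro up_step[where p="(False,i)"]) (auto simp: bp12_def emb_upper_def)
      moreover have "((2,i),(1,i)) \<in> ?R" using 8 p
        by (intro low_step[where p="(False,i)"]) (auto simp: Ydiag_def emb_lower_def)
      ultimately have "((0,i),(2,i)) \<in> ?R \<and> ((2,i),(0,i)) \<in> ?R" using conn_trans conn_sym by blast
      then show ?thesis using 8 p by (simp add: bp12_def emb_outer_def)
    qed
  qed
qed (use n in \<open>auto simp: bp12_def Ydiag_def emb_upper_def emb_lower_def emb_outer_def bpoints_def split: if_splits\<close>)

lemma p12_Y_loops: assumes n: "n \<ge> 3" shows "bloops n (bp12 n) (Ydiag n) = 0"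
proof (rule bloops_zero, intro allI impI)
  let ?R = "stack_conn n (bp12 n) (Ydiag n)"
  fix i assume i: "i < n"
  have a1: "((0,2),(1,2)) \<in> ?R" using n
    by (intro up_step[where p="(True,2)"]) (auto simp: bp12_def emb_upper_def)
  have a2: "((1,2),(1,0)) \<in> ?R" using n
    by (intro low_step[where p="(True,2)"]) (auto simp: Ydiag_def emb_lower_def)
  have a4: "((1,1),(2,2)) \<in> ?R" using n
    by (intro low_step[where p="(True,1)"]) (auto simp: Ydiag_def emb_lower_def)
  have "((1,i),(0,i)) \<in> ?R" if "i \<ge> 3" "i < n" for i using that
    by (intro up_step[where p="(False,i)"]) (auto simp: bp12_def emb_upper_def)
  moreover have "((1,0),(0,2)) \<in> ?R" using conn_sym[OF conn_trans[OF a1 a2]] .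
  moreover have "((1,2),(0,2)) \<in> ?R" using conn_sym[OF a1] .
  ultimately have "\<exists>x. ((1, i), x) \<in> ?R \<and> fst x \<noteq> 1"
    using i a4 by (cases "i \<ge> 3") (auto intro: exI[of _ "(0,2)"] exI[of _ "(2,2)"] simp: not_le less_Suc_eq numeral_3_eq_3 numeral_2_eq_2)
  then show "\<exists>x. ((1, i), x) \<in> ?R \<and> fst x \<noteq> 1" .
qed



lemma S_memI:
  assumes "is_partition \<mu>" "sum_list \<mu> \<le> n" "even (n - sum_list \<mu>)"
    and "boxes \<mu> \<subseteq> {..3} \<times> {..3}" and "b \<in> boxes \<mu>" and "oshift \<mu> b + z = 0"
  shows "z \<in> S_set n"
proof -
  have fin: "finite (boxes \<mu>)" using assms(4) finite_subset by blast
  have "poly (P_O \<mu>) (of_int z) = 0"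
    unfolding P_O_def poly_smult poly_prod
    using fin assms(5,6) by (auto intro!: bexI[of _ b] simp: prod_zero_iff)
  then show ?thesis unfolding S_set_def using assms(1-3) by blast
qed

lemma one_in_S: assumes "n \<ge> 3" shows "1 \<in> S_set n"
proof (cases "even n")
  case True
  show ?thesis
    by (rule S_memI[of "[2]" _ "(1,2)"]) (use assms True in \<open>auto simp: is_partition_def boxes_def part_def oshift_def\<close>)
next
  case False
  show ?thesis
    by (rule S_memI[of "[3]" _ "(1,3)"]) (use assms False in \<open>auto simp: is_partition_def boxes_def part_def oshift_def\<close>)
qed

lemma m2_in_S: assumes "n \<ge> 3" shows "-2 \<in> S_set n"
proof (cases "even n")
  case True
  show ?thesis
    by (rule S_memI[of "[2]" _ "(1,1)"]) (use assms True in \<open>auto simp: is_partition_def boxes_def part_def oshift_def\<close>)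
next
  case False
  show ?thesis
    by (rule S_memI[of "[2,1]" _ "(1,1)"]) (use assms False in \<open>auto simp: is_partition_def boxes_def part_def oshift_def le_Suc_eq\<close>)
qed



lemma smult_one_mat': "1 \<cdot>\<^sub>m (A :: 'a :: field mat) = A"
  by (rule eq_matI) auto

lemma smult_mat_vec': "A \<in> carrier_mat N N \<Longrightarrow> x \<in> carrier_vec N \<Longrightarrow> (k \<cdot>\<^sub>m A) *\<^sub>v x = k \<cdot>\<^sub>v (A *\<^sub>v (x :: 'a :: field vec))"
  by (intro eq_vecI) (auto simp: scalar_prod_def sum_distrib_left ac_simps)

lemma vec_scal_one:
  fixes v :: "'a::field vec"
  assumes "v \<in> carrier_vec N" "v \<noteq> 0\<^sub>v N" "c \<cdot>\<^sub>v v = v"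
  shows "c = 1"
proof -
  obtain i where i: "i < N" "v $ i \<noteq> 0"
  proof (rule ccontr)
    assume "\<not> thesis"
    then have "\<forall>i<N. v $ i = 0" using that by blast
    then have "v = 0\<^sub>v N" using assms(1) by (intro eq_vecI) auto
    then show False using assms(2) by simp
  qed
  have "c * v $ i = v $ i" using arg_cong[OF assms(3), of "\<lambda>x. x $ i"] i assms(1) by simp
  then show ?thesis using i(2) by simp
qed

lemma main_alg:
  fixes S P B :: "'k::field mat" and m :: 'k
  assumes S: "S \<in> carrier_mat N N" and P: "P \<in> carrier_mat N N" and B: "B \<in> carrier_mat N N"
    and SS: "S * S = 1\<^sub>m N" and PP: "P * P = m \<cdot>\<^sub>m P" and SP: "S * P = P" and PS: "P * S = P"
    and BB: "B * B = 1\<^sub>m N" and PBP: "P * (B * P) = P" and braid: "(S * B) * S = (B * S) * B"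
    and m1: "m \<noteq> 1" and m2: "m \<noteq> -2"
  shows "spectrum (S - P) \<subseteq> {-1,1} \<or> (P \<noteq> 0\<^sub>m N N \<and> spectrum (S - P) = {-1, 1, 1 - m})"
proof -
  have cS: "\<And>x. x \<in> carrier_vec N \<Longrightarrow> S *\<^sub>v x \<in> carrier_vec N" using S by auto
  have cP: "\<And>x. x \<in> carrier_vec N \<Longrightarrow> P *\<^sub>v x \<in> carrier_vec N" using P by auto
  have cB: "\<And>x. x \<in> carrier_vec N \<Longrightarrow> B *\<^sub>v x \<in> carrier_vec N" using B by auto
  have vSS: "\<And>x. x \<in> carrier_vec N \<Longrightarrow> S *\<^sub>v (S *\<^sub>v x) = x"
    using S by (metis SS assoc_mult_mat_vec one_mult_mat_vec)
  have vBB: "\<And>x. x \<in> carrier_vec N \<Longrightarrow> B *\<^sub>v (B *\<^sub>v x) = x"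
    using B by (metis BB assoc_mult_mat_vec one_mult_mat_vec)
  have vPP: "\<And>x. x \<in> carrier_vec N \<Longrightarrow> P *\<^sub>v (P *\<^sub>v x) = m \<cdot>\<^sub>v (P *\<^sub>v x)"
    using P by (metis PP assoc_mult_mat_vec smult_mat_vec')
  have vSP: "\<And>x. x \<in> carrier_vec N \<Longrightarrow> S *\<^sub>v (P *\<^sub>v x) = P *\<^sub>v x"
    using S P by (metis SP assoc_mult_mat_vec)
  have vPS: "\<And>x. x \<in> carrier_vec N \<Longrightarrow> P *\<^sub>v (S *\<^sub>v x) = P *\<^sub>v x"
    using S P by (metis PS assoc_mult_mat_vec)
  have vPBP: "\<And>x. x \<in> carrier_vec N \<Longrightarrow> P *\<^sub>v (B *\<^sub>v (P *\<^sub>v x)) = P *\<^sub>v x"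
  proof -
    fix x :: "'k vec" assume x: "x \<in> carrier_vec N"
    have "(P * (B * P)) *\<^sub>v x = P *\<^sub>v ((B * P) *\<^sub>v x)" using P B x by (intro assoc_mult_mat_vec) auto
    also have "\<dots> = P *\<^sub>v (B *\<^sub>v (P *\<^sub>v x))" using P B x by simp
    finally have "P *\<^sub>v (B *\<^sub>v (P *\<^sub>v x)) = (P * (B * P)) *\<^sub>v x" by simp
    then show "P *\<^sub>v (B *\<^sub>v (P *\<^sub>v x)) = P *\<^sub>v x" using PBP by simp
  qed
  have vbraid: "\<And>x. x \<in> carrier_vec N \<Longrightarrow> S *\<^sub>v (B *\<^sub>v (S *\<^sub>v x)) = B *\<^sub>v (S *\<^sub>v (B *\<^sub>v x))"
  proof -
    fix x :: "'k vec" assume x: "x \<in> carrier_vec N"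
    have "((S * B) * S) *\<^sub>v x = (S * B) *\<^sub>v (S *\<^sub>v x)" using S B x by (intro assoc_mult_mat_vec) auto
    also have "\<dots> = S *\<^sub>v (B *\<^sub>v (S *\<^sub>v x))" using S B x by (intro assoc_mult_mat_vec) auto
    finally have 1: "S *\<^sub>v (B *\<^sub>v (S *\<^sub>v x)) = ((S * B) * S) *\<^sub>v x" by simp
    have "((B * S) * B) *\<^sub>v x = (B * S) *\<^sub>v (B *\<^sub>v x)" using S B x by (intro assoc_mult_mat_vec) auto
    also have "\<dots> = B *\<^sub>v (S *\<^sub>v (B *\<^sub>v x))" using S B x by (intro assoc_mult_mat_vec) auto
    finally have 2: "((B * S) * B) *\<^sub>v x = B *\<^sub>v (S *\<^sub>v (B *\<^sub>v x))" .
    have "S *\<^sub>v (B *\<^sub>v (S *\<^sub>v x)) = ((B * S) * B) *\<^sub>v x" using 1 braid by simp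
    also have "\<dots> = B *\<^sub>v (S *\<^sub>v (B *\<^sub>v x))" using 2 .
    finally show "S *\<^sub>v (B *\<^sub>v (S *\<^sub>v x)) = B *\<^sub>v (S *\<^sub>v (B *\<^sub>v x))" .
  qed
  have T: "\<And>x. x \<in> carrier_vec N \<Longrightarrow> (S - P) *\<^sub>v x = S *\<^sub>v x - P *\<^sub>v x"
    using S P by (simp add: minus_mult_distrib_mat_vec)
  have dT: "dim_row (S - P) = N" using S P by simp
  have ev_iff: "eigenvalue (S - P) k \<longleftrightarrow> (\<exists>v. v \<in> carrier_vec N \<and> v \<noteq> 0\<^sub>v N \<and> S *\<^sub>v v - P *\<^sub>v v = k \<cdot>\<^sub>v v)" for k
    unfolding eigenvalue_def eigenvector_def dT using T by auto
  have kPv0: "k = 1 \<or> k = -1"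
    if v: "v \<in> carrier_vec N" "v \<noteq> 0\<^sub>v N" "S *\<^sub>v v - P *\<^sub>v v = k \<cdot>\<^sub>v v" and Pv0: "P *\<^sub>v v = 0\<^sub>v N" for v k
  proof -
    have Sv: "S *\<^sub>v v = k \<cdot>\<^sub>v v" using v(3) Pv0 cS[OF v(1)] by simp
    have "v = S *\<^sub>v (S *\<^sub>v v)" using vSS v by simp
    also have "\<dots> = k \<cdot>\<^sub>v (S *\<^sub>v v)" using Sv S v by (simp add: mult_mat_vec)
    also have "\<dots> = (k * k) \<cdot>\<^sub>v v" using Sv by (simp add: smult_smult_assoc)
    finally have "k * k = 1" using vec_scal_one[OF v(1,2)] by metis
    then have "(k - 1) * (k + 1) = 0" by (simp add: algebra_simps)
    then show "k = 1 \<or> k = -1" by (simp add: eq_neg_iff_add_eq_0)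
  qed
  have step1: "k = 1 - m \<or> k = 1 \<or> k = -1"
    if v: "v \<in> carrier_vec N" "v \<noteq> 0\<^sub>v N" "S *\<^sub>v v - P *\<^sub>v v = k \<cdot>\<^sub>v v" for v k
  proof (cases "k = 1 - m")
    case True then show ?thesis by simp
  next
    case False
    have "P *\<^sub>v (S *\<^sub>v v - P *\<^sub>v v) = P *\<^sub>v v - m \<cdot>\<^sub>v (P *\<^sub>v v)"
      using P v(1) cS cP vPS vPP by (simp add: mult_minus_distrib_mat_vec)
    moreover have "P *\<^sub>v (k \<cdot>\<^sub>v v) = k \<cdot>\<^sub>v (P *\<^sub>v v)" using P v(1) by (simp add: mult_mat_vec)
    ultimately have e: "P *\<^sub>v v - m \<cdot>\<^sub>v (P *\<^sub>v v) = k \<cdot>\<^sub>v (P *\<^sub>v v)" using v(3) by simp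
    have Pv0: "P *\<^sub>v v = 0\<^sub>v N"
    proof (intro eq_vecI)
      fix i assume i: "i < dim_vec (0\<^sub>v N :: 'k vec)"
      have "(P *\<^sub>v v) $ i - m * (P *\<^sub>v v) $ i = k * (P *\<^sub>v v) $ i"
        using arg_cong[OF e, of "\<lambda>x. x $ i"] i P by simp
      then have "(1 - m - k) * (P *\<^sub>v v) $ i = 0" by (simp add: algebra_simps)
      then show "(P *\<^sub>v v) $ i = (0\<^sub>v N :: 'k vec) $ i" using False i by simp
    qed (use P in simp)
    then show ?thesis using kPv0[OF v Pv0] by simp
  qed
  have sub3: "spectrum (S - P) \<subseteq> {-1, 1, 1 - m}"
    unfolding spectrum_def using step1 ev_iff by blast
  show ?thesis
  proof (cases "spectrum (S - P) \<subseteq> {-1,1}")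
    case True then show ?thesis by simp
  next
    case False
    then obtain k where k: "eigenvalue (S - P) k" "k \<noteq> 1" "k \<noteq> -1"
      unfolding spectrum_def by auto
    then obtain v where v: "v \<in> carrier_vec N" "v \<noteq> 0\<^sub>v N" "S *\<^sub>v v - P *\<^sub>v v = k \<cdot>\<^sub>v v"
      using ev_iff by blast
    have k1m: "k = 1 - m" using step1[OF v] k by auto
    have Pv: "P *\<^sub>v v \<noteq> 0\<^sub>v N" using kPv0[OF v] k by auto
    define u where "u = P *\<^sub>v v"
    define w where "w = B *\<^sub>v u"
    define a where "a = S *\<^sub>v w"
    have cu: "u \<in> carrier_vec N" using u_def cP v by simp
    have cw: "w \<in> carrier_vec N" using w_def cB cu by simp
    have ca: "a \<in> carrier_vec N" using a_def cS cw by simp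
    have u0: "u \<noteq> 0\<^sub>v N" using Pv u_def by simp
    have Su: "S *\<^sub>v u = u" using vSP v u_def by simp
    have Pu: "P *\<^sub>v u = m \<cdot>\<^sub>v u" using vPP v u_def by simp
    have Pw: "P *\<^sub>v w = u" using vPBP v u_def w_def by simp
    have Bw: "B *\<^sub>v w = u" using vBB cu w_def by simp
    have Sa: "S *\<^sub>v a = w" using vSS cw a_def by simp
    have Pa: "P *\<^sub>v a = u" using vPS cw a_def Pw by simp
    have Ba: "B *\<^sub>v a = a" using vbraid[OF cu] Su a_def w_def by simp
    have nm1: "u \<noteq> w"
    proof
      assume "u = w"
      then have "m \<cdot>\<^sub>v u = u" using Pu Pw by simp
      then show False using vec_scal_one[OF cu u0] m1 by blast
    qed
    have "eigenvalue (S - P) (-1)"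
    proof -
      define x where "x = w - a"
      have cx: "x \<in> carrier_vec N" using x_def cw ca by simp
      have Sx: "S *\<^sub>v x = a - w" using x_def S cw ca Sa by (simp add: mult_minus_distrib_mat_vec a_def)
      have Px: "P *\<^sub>v x = u - u" using x_def P cw ca Pa Pw by (simp add: mult_minus_distrib_mat_vec)
      have x0: "x \<noteq> 0\<^sub>v N"
      proof
        assume x0: "x = 0\<^sub>v N"
        have "w = a"
        proof (intro eq_vecI)
          fix i assume i: "i < dim_vec a"
          have "(w - a) $ i = 0" using arg_cong[OF x0, of "\<lambda>x. x $ i"] x_def i ca by simp
          then show "w $ i = a $ i" using i cw ca by simp
        qed (use cw ca in simp)
        then show False using Ba Bw nm1 by simp
      qed
      have "S *\<^sub>v x - P *\<^sub>v x = (-1) \<cdot>\<^sub>v x"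
        unfolding Sx Px using cu cw ca by (unfold x_def, intro eq_vecI) auto
      then show ?thesis using ev_iff cx x0 by blast
    qed
    moreover have "eigenvalue (S - P) 1"
    proof -
      define x where "x = m \<cdot>\<^sub>v a + m \<cdot>\<^sub>v w - 2 \<cdot>\<^sub>v u"
      have cx: "x \<in> carrier_vec N" using x_def cu cw ca by simp
      have Sx: "S *\<^sub>v x = m \<cdot>\<^sub>v w + m \<cdot>\<^sub>v a - 2 \<cdot>\<^sub>v u" using x_def S cu cw ca Sa Su
        by (simp add: mult_minus_distrib_mat_vec mult_add_distrib_mat_vec mult_mat_vec a_def)
      have Px: "P *\<^sub>v x = m \<cdot>\<^sub>v u + m \<cdot>\<^sub>v u - 2 \<cdot>\<^sub>v (m \<cdot>\<^sub>v u)" using x_def P cu cw ca Pa Pw Pu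
        by (simp add: mult_minus_distrib_mat_vec mult_add_distrib_mat_vec mult_mat_vec)
      have x0: "x \<noteq> 0\<^sub>v N"
      proof
        assume x0: "x = 0\<^sub>v N"
        have Bx: "B *\<^sub>v x = m \<cdot>\<^sub>v a + m \<cdot>\<^sub>v u - 2 \<cdot>\<^sub>v w" using x_def B cu cw ca Ba Bw
          by (simp add: mult_minus_distrib_mat_vec mult_add_distrib_mat_vec mult_mat_vec w_def)
        have "B *\<^sub>v x = 0\<^sub>v N" using x0 B by (intro eq_vecI) (auto simp: scalar_prod_def)
        then have "u = w"
        proof (intro eq_vecI)
          fix i assume i: "i < dim_vec w"
          have "m * a $ i + m * w $ i - 2 * u $ i = 0" using arg_cong[OF x0, of "\<lambda>x. x $ i"] i cu cw ca x_def by simp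
          moreover have "m * a $ i + m * u $ i - 2 * w $ i = 0" using arg_cong[OF Bx, of "\<lambda>x. x $ i"] \<open>B *\<^sub>v x = 0\<^sub>v N\<close> i cu cw ca by simp
          moreover have "(m + 2) * (u $ i - w $ i) = (m * a $ i + m * u $ i - 2 * w $ i) - (m * a $ i + m * w $ i - 2 * u $ i)"
            by (simp add: algebra_simps)
          ultimately have "(m + 2) * (u $ i - w $ i) = 0" by simp
          moreover have "m + 2 \<noteq> 0"
          proof
            assume "m + 2 = 0"
            then have "m = -2" by (simp add: eq_neg_iff_add_eq_0)
            then show False using m2 by simp
          qed
          ultimately show "u $ i = w $ i" by simp
        qed (use cu cw in simp)
        then show False using nm1 by simp
      qed
      have "S *\<^sub>v x - P *\<^sub>v x = 1 \<cdot>\<^sub>v x"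
        unfolding Sx Px using cu cw ca by (unfold x_def, intro eq_vecI) (auto simp: algebra_simps)
      then show ?thesis using ev_iff cx x0 by blast
    qed
    moreover have "eigenvalue (S - P) (1 - m)" using k k1m by simp
    moreover have "P \<noteq> 0\<^sub>m N N" using Pv v by auto
    ultimately show ?thesis using sub3 unfolding spectrum_def by auto
  qed
qed


theorem mainTheorem9:
  fixes m :: "'k::field_char_0" and n N :: nat and \<rho> :: "bdiagram \<Rightarrow> 'k mat"
  assumes "n \<ge> 3"
    and "\<forall>z\<in>S_set n. m \<noteq> of_int z"
    and "irreducible_brauer_rep n m N \<rho>"
  shows "spectrum (rep_t12 n \<rho>) \<subseteq> {-1, 1}
       \<or> (\<not> factors_through_sym n N \<rho> \<and> spectrum (rep_t12 n \<rho>) = {-1, 1, 1 - m})"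
proof -
  have n: "n \<ge> 3" by fact
  have rep: "brauer_rep n m N \<rho>" using assms(3) by (simp add: irreducible_brauer_rep_def)
  have car: "\<And>d. d \<in> brauer_diagrams n \<Longrightarrow> \<rho> d \<in> carrier_mat N N" using rep by (simp add: brauer_rep_def)
  have one: "\<rho> (bid n) = 1\<^sub>m N" using rep by (simp add: brauer_rep_def)
  have mul: "\<And>d1 d2. d1 \<in> brauer_diagrams n \<Longrightarrow> d2 \<in> brauer_diagrams n \<Longrightarrow>
      \<rho> d1 * \<rho> d2 = (m ^ bloops n d1 d2) \<cdot>\<^sub>m \<rho> (bcompose n d1 d2)"
    using rep unfolding brauer_rep_def by blast
  have p12: "isperm n sw12 sw12" and p23: "isperm n sw23 sw23" using isperm_sw12[OF n] isperm_sw23[OF n] by auto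
  have b12: "bs12 n \<in> brauer_diagrams n" using pdiag_brauer[OF p12] by (simp add: bs12_pdiag)
  have b23: "bs23 n \<in> brauer_diagrams n" using pdiag_brauer[OF p23] by (simp add: bs23_def)
  have bp: "bp12 n \<in> brauer_diagrams n" using bp12_brauer[OF n] .
  have bY: "Ydiag n \<in> brauer_diagrams n" using Y_brauer[OF n] .
  define S where "S = \<rho> (bs12 n)"
  define P where "P = \<rho> (bp12 n)"
  define B where "B = \<rho> (bs23 n)"
  have cS: "S \<in> carrier_mat N N" using car[OF b12] S_def by simp
  have cP: "P \<in> carrier_mat N N" using car[OF bp] P_def by simp
  have cB: "B \<in> carrier_mat N N" using car[OF b23] B_def by simp
  have SS: "S * S = 1\<^sub>m N"
    using mul[OF b12 b12] s12_s12[OF n] pp_loops[OF p12, of "bs12 n"] one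
    by (simp add: S_def bs12_pdiag smult_one_mat')
  have BB: "B * B = 1\<^sub>m N"
    using mul[OF b23 b23] s23_s23[OF n] pp_loops[OF p23, of "bs23 n"] one
    by (simp add: B_def bs23_def smult_one_mat')
  have PP: "P * P = m \<cdot>\<^sub>m P"
    using mul[OF bp bp] p12_p12[OF n] p12_p12_loops[OF n] by (simp add: P_def)
  have SP: "S * P = P"
    using mul[OF b12 bp] s12_p12[OF n] pp_loops[OF p12, of "bp12 n"]
    by (simp add: S_def P_def bs12_pdiag smult_one_mat')
  have PS: "P * S = P"
    using mul[OF bp b12] p12_s12[OF n] pr_loops[OF p12, of "bp12 n"]
    by (simp add: S_def P_def bs12_pdiag smult_one_mat')
  have BP: "B * P = \<rho> (Ydiag n)"
    using mul[OF b23 bp] s23_p12[OF n] pp_loops[OF p23, of "bp12 n"]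
    by (simp add: B_def P_def bs23_def smult_one_mat')
  have PY: "P * \<rho> (Ydiag n) = P"
    using mul[OF bp bY] p12_Y[OF n] p12_Y_loops[OF n]
    by (simp add: P_def smult_one_mat')
  have PBP: "P * (B * P) = P" using BP PY by simp
  define c1 where "c1 = bcompose n (bs12 n) (bs23 n)"
  define c2 where "c2 = bcompose n (bs23 n) (bs12 n)"
  have c1p: "c1 = pdiag n (sw23 \<circ> sw12) (sw12 \<circ> sw23)"
    using pp_compose[OF p12 p23] c1_def by (simp add: bs12_pdiag bs23_def)
  have c2p: "c2 = pdiag n (sw12 \<circ> sw23) (sw23 \<circ> sw12)"
    using pp_compose[OF p23 p12] c2_def by (simp add: bs12_pdiag bs23_def)
  have pc1: "isperm n (sw23 \<circ> sw12) (sw12 \<circ> sw23)" using isperm_comp[OF p12 p23] .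
  have pc2: "isperm n (sw12 \<circ> sw23) (sw23 \<circ> sw12)" using isperm_comp[OF p23 p12] .
  have bc1: "c1 \<in> brauer_diagrams n" using pdiag_brauer[OF pc1] c1p by simp
  have bc2: "c2 \<in> brauer_diagrams n" using pdiag_brauer[OF pc2] c2p by simp
  have SB: "S * B = \<rho> c1"
    using mul[OF b12 b23] pp_loops[OF p12, of "bs23 n"]
    by (simp add: S_def B_def c1_def bs12_pdiag smult_one_mat')
  have BS: "B * S = \<rho> c2"
    using mul[OF b23 b12] pp_loops[OF p23, of "bs12 n"]
    by (simp add: S_def B_def c2_def bs23_def smult_one_mat')
  have SBS: "\<rho> c1 * S = \<rho> (bs13 n)"
    using mul[OF bc1 b12] braid1[OF n] pp_loops[OF pc1, of "bs12 n"]
    by (simp add: S_def c1_def[symmetric] c1p[symmetric] smult_one_mat')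
  have BSB: "\<rho> c2 * B = \<rho> (bs13 n)"
    using mul[OF bc2 b23] braid2[OF n] pp_loops[OF pc2, of "bs23 n"]
    by (simp add: B_def c2_def[symmetric] c2p[symmetric] smult_one_mat')
  have braid: "(S * B) * S = (B * S) * B" using SB BS SBS BSB by simp
  have m1: "m \<noteq> 1" using assms(2) one_in_S[OF n] by force
  have m2: "m \<noteq> -2" using assms(2) m2_in_S[OF n] by force
  have T: "rep_t12 n \<rho> = S - P" by (simp add: rep_t12_def S_def P_def)
  have res: "spectrum (S - P) \<subseteq> {-1,1} \<or> (P \<noteq> 0\<^sub>m N N \<and> spectrum (S - P) = {-1, 1, 1 - m})"
    by (rule main_alg[OF cS cP cB SS PP SP PS BB PBP braid m1 m2])
  have nf: "\<not> factors_through_sym n N \<rho>" if "P \<noteq> 0\<^sub>m N N"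
  proof
    assume "factors_through_sym n N \<rho>"
    then have "\<rho> (bid n) * \<rho> (bp12 n) * \<rho> (bid n) = 0\<^sub>m N N"
      using pdiag_brauer[OF isperm_id] unfolding factors_through_sym_def by (simp add: bid_pdiag)
    then have "P = 0\<^sub>m N N" using one cP by (simp add: P_def)
    then show False using that by simp
  qed
  show ?thesis using res nf T by auto
qed

end
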